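(* Let $X$ be a $T_0$-space and consider: (1) $P_S(X)$ is $S^{\ast}$-well-filtered; (2) $P_S(X)$ is a $d^{\ast}$-space; (3) $X$ is $S^{\ast}$-well-filtered; (4) $X$ is weak well-filtered. Then $(1)\Rightarrow(2)\Rightarrow(3)\Rightarrow(4)$. Moreover, if $X$ is coherent (in particular, if $X$ is KC), then $(2)\Leftrightarrow(3)\Leftrightarrow(4)$.
   Context: For a space $X$, the specialization order is $x\le y$ iff $x\in cl\{y\}$; ${\uparrow}$ is taken with respect to it; saturated = upper set in this order. $K(X)$ is the set of nonempty compact saturated subsets of $X$; a family in $K(X)$ is filtered if any two members contain a common member. The Smyth power space $P_S(X)$ is $K(X)$ with the upper Vietoris topology, generated by the sets $\Box U=\{K\in K(X)\mid K\subseteq U\}$ for $U$ open in $X$; its specialization order is reverse inclusion. $X$ is weak well-filtered if for every filtered $\{K_i\}\subseteq K(X)$ and nonempty open $U$, $\bigcap_i K_i\subseteq U$ implies $K_i\subseteq U$ for some $i$. $X$ is $S^{\ast}$-well-filtered if for every filtered $\{K_i\}\subseteq K(X)$, $G\in K(X)$ and nonempty open $U$, $\bigcap_i K_i\cap G\subseteq U$ implies $K_i\cap G\subseteq U$ for some $i$. $X$ is a $d^{\ast}$-space if for every directed $D\subseteq X$, $x\in X$ and nonempty open $U$, $\bigcap_{d\in D}{\uparrow}d\cap{\uparrow}x\subseteq U$ implies ${\uparrow}d\cap{\uparrow}x\subseteq U$ for some $d\in D$. $X$ is coherent if the intersection of any two compact saturated sets is compact; $X$ is KC if every compact subset is closed.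 *)

theory Defs
  imports "HOL-Analysis.Analysis"
begin

definition spec_le :: "'a topology \<Rightarrow> 'a \<Rightarrow> 'a \<Rightarrow> bool" where
  "spec_le X x y \<longleftrightarrow> x \<in> topspace X \<and> y \<in> topspace X \<and> x \<in> X closure_of {y}"

definition upset :: "'a topology \<Rightarrow> 'a set \<Rightarrow> 'a set" where
  "upset X A = {y \<in> topspace X. \<exists>x\<in>A. spec_le X x y}"

definition saturated :: "'a topology \<Rightarrow> 'a set \<Rightarrow> bool" where
  "saturated X A \<longleftrightarrow> A \<subseteq> topspace X \<and> upset X A = A"

definition KX :: "'a topology \<Rightarrow> 'a set set" where
  "KX X = {K. K \<noteq> {} \<and> compactin X K \<and> saturated X K}"

definition filtered_fam :: "'a set set \<Rightarrow> bool" where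
  "filtered_fam F \<longleftrightarrow> F \<noteq> {} \<and> (\<forall>A\<in>F. \<forall>B\<in>F. \<exists>C\<in>F. C \<subseteq> A \<and> C \<subseteq> B)"

definition directed_in :: "'a topology \<Rightarrow> 'a set \<Rightarrow> bool" where
  "directed_in X D \<longleftrightarrow> D \<noteq> {} \<and> D \<subseteq> topspace X \<and>
     (\<forall>a\<in>D. \<forall>b\<in>D. \<exists>c\<in>D. spec_le X a c \<and> spec_le X b c)"

definition smyth :: "'a topology \<Rightarrow> 'a set topology" where
  "smyth X = topology_generated_by {{K \<in> KX X. K \<subseteq> U} | U. openin X U}"

definition weak_well_filtered :: "'a topology \<Rightarrow> bool" where
  "weak_well_filtered X \<longleftrightarrow>
    (\<forall>F U. F \<subseteq> KX X \<and> filtered_fam F \<and> openin X U \<and> U \<noteq> {} \<and> \<Inter>F \<subseteq> U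
       \<longrightarrow> (\<exists>K\<in>F. K \<subseteq> U))"

definition S_star_well_filtered :: "'a topology \<Rightarrow> bool" where
  "S_star_well_filtered X \<longleftrightarrow>
    (\<forall>F G U. F \<subseteq> KX X \<and> filtered_fam F \<and> G \<in> KX X \<and> openin X U \<and> U \<noteq> {}
       \<and> \<Inter>F \<inter> G \<subseteq> U \<longrightarrow> (\<exists>K\<in>F. K \<inter> G \<subseteq> U))"

definition d_star_space :: "'a topology \<Rightarrow> bool" where
  "d_star_space X \<longleftrightarrow>
    (\<forall>D x U. directed_in X D \<and> x \<in> topspace X \<and> openin X U \<and> U \<noteq> {}
       \<and> (\<Inter>d\<in>D. upset X {d}) \<inter> upset X {x} \<subseteq> U
       \<longrightarrow> (\<exists>d\<in>D. upset X {d} \<inter> upset X {x} \<subseteq> U))"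

definition coherent_space :: "'a topology \<Rightarrow> bool" where
  "coherent_space X \<longleftrightarrow>
    (\<forall>A B. compactin X A \<and> saturated X A \<and> compactin X B \<and> saturated X B
       \<longrightarrow> compactin X (A \<inter> B))"

end

theory Submission
  imports Defs
begin

lemma spec_refl: "x \<in> topspace X \<Longrightarrow> spec_le X x x"
  unfolding spec_le_def using closure_of_subset[of "{x}" X] by auto

lemma open_upper: "openin X V \<Longrightarrow> x \<in> V \<Longrightarrow> spec_le X x y \<Longrightarrow> y \<in> V"
  unfolding spec_le_def in_closure_of by auto

lemma spec_trans: "spec_le X x y \<Longrightarrow> spec_le X y z \<Longrightarrow> spec_le X x z"
  unfolding spec_le_def in_closure_of by blast

lemma upset_single_KX:
  assumes "x \<in> topspace X" shows "upset X {x} \<in> KX X"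
proof -
  have ne: "x \<in> upset X {x}" using assms spec_refl unfolding upset_def by fastforce
  have sub: "upset X {x} \<subseteq> topspace X" unfolding upset_def by auto
  have cpt: "compactin X (upset X {x})"
    unfolding compactin_def
  proof (intro conjI allI impI)
    show "upset X {x} \<subseteq> topspace X" by (fact sub)
    fix \<U> assume h: "(\<forall>U\<in>\<U>. openin X U) \<and> upset X {x} \<subseteq> \<Union>\<U>"
    then obtain V where V: "V \<in> \<U>" "x \<in> V" using ne by blast
    have "upset X {x} \<subseteq> V" using V h open_upper unfolding upset_def by fastforce
    then show "\<exists>\<F>. finite \<F> \<and> \<F> \<subseteq> \<U> \<and> upset X {x} \<subseteq> \<Union>\<F>"
      using V by (intro exI[of _ "{V}"]) auto
  qed
  have sat: "saturated X (upset X {x})"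
    unfolding saturated_def
  proof (intro conjI sub)
    show "upset X (upset X {x}) = upset X {x}"
    proof
      show "upset X (upset X {x}) \<subseteq> upset X {x}"
      proof
        fix z assume "z \<in> upset X (upset X {x})"
        then obtain y where "z \<in> topspace X" "y \<in> upset X {x}" "spec_le X y z"
          unfolding upset_def by blast
        then show "z \<in> upset X {x}" unfolding upset_def using spec_trans by fastforce
      qed
      show "upset X {x} \<subseteq> upset X (upset X {x})"
      proof
        fix z assume z: "z \<in> upset X {x}"
        then have "z \<in> topspace X" using sub by blast
        then have "z \<in> {y \<in> topspace X. \<exists>w\<in>upset X {x}. spec_le X w y}"
          using z spec_refl[of z X] by blast
        then show "z \<in> upset X (upset X {x})" by (simp only: upset_def[of X "upset X {x}"])
      qed
    qed
  qed
  show ?thesis using ne cpt sat unfolding KX_def by blast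
qed

lemma saturated_sep:
  assumes "saturated X A" "y \<in> topspace X" "y \<notin> A"
  shows "\<exists>U. openin X U \<and> A \<subseteq> U \<and> y \<notin> U"
proof -
  have "\<forall>x\<in>A. \<exists>V. openin X V \<and> x \<in> V \<and> y \<notin> V"
  proof
    fix x assume x: "x \<in> A"
    have "\<not> spec_le X x y" using assms x unfolding saturated_def upset_def by blast
    moreover have "x \<in> topspace X" using assms(1) x unfolding saturated_def by auto
    ultimately show "\<exists>V. openin X V \<and> x \<in> V \<and> y \<notin> V"
      using assms(2) unfolding spec_le_def in_closure_of by auto
  qed
  then obtain V where V: "\<And>x. x \<in> A \<Longrightarrow> openin X (V x) \<and> x \<in> V x \<and> y \<notin> V x" by metis
  show ?thesis using V by (intro exI[of _ "\<Union>x\<in>A. V x"]) auto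
qed

lemma topspace_smyth: "topspace (smyth X) = KX X"
  unfolding smyth_def topology_generated_by_topspace
  by (auto simp: KX_def saturated_def intro!: exI[of _ "topspace X"])

lemma open_smyth_basic: "openin X U \<Longrightarrow> openin (smyth X) {K \<in> KX X. K \<subseteq> U}"
  unfolding smyth_def by (rule topology_generated_by_Basis) blast

lemma smyth_open_nbhd:
  assumes "openin (smyth X) \<U>" "K \<in> \<U>"
  shows "\<exists>U. openin X U \<and> K \<subseteq> U \<and> {K' \<in> KX X. K' \<subseteq> U} \<subseteq> \<U>"
proof -
  have "generate_topology_on {{K \<in> KX X. K \<subseteq> U} | U. openin X U} \<U>"
    using assms(1) unfolding smyth_def by (rule openin_topology_generated_by)
  then show ?thesis using assms(2)
  proof (induction arbitrary: K)
    case Empty then show ?case by simp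
  next
    case (Int a b)
    from Int.prems have Ka: "K \<in> a" and Kb: "K \<in> b" by auto
    obtain U1 where U1: "openin X U1" "K \<subseteq> U1" "{K' \<in> KX X. K' \<subseteq> U1} \<subseteq> a"
      using Int.IH(1)[OF Ka] by blast
    obtain U2 where U2: "openin X U2" "K \<subseteq> U2" "{K' \<in> KX X. K' \<subseteq> U2} \<subseteq> b"
      using Int.IH(2)[OF Kb] by blast
    have "openin X (U1 \<inter> U2)" using U1(1) U2(1) by (rule openin_Int)
    moreover have "K \<subseteq> U1 \<inter> U2" using U1(2) U2(2) by (rule Int_greatest)
    moreover have "{K' \<in> KX X. K' \<subseteq> U1 \<inter> U2} \<subseteq> a \<inter> b" using U1(3) U2(3) by auto
    ultimately show ?case by (intro exI[of _ "U1 \<inter> U2"]) (simp only: conj_assoc)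
  next
    case (UN \<K>)
    from UN.prems obtain k where k: "k \<in> \<K>" "K \<in> k" by (rule UnionE)
    obtain U where U: "openin X U" "K \<subseteq> U" "{K' \<in> KX X. K' \<subseteq> U} \<subseteq> k"
      using UN.IH[OF k] by blast
    have "{K' \<in> KX X. K' \<subseteq> U} \<subseteq> \<Union>\<K>" using U(3) k(1) by (rule subset_trans[OF _ Union_upper])
    then show ?case using U(1,2) by blast
  next
    case (Basis s)
    then obtain U where U: "s = {K \<in> KX X. K \<subseteq> U}" "openin X U" by blast
    then show ?case using Basis.prems by (intro exI[of _ U]) auto
  qed
qed

lemma spec_smyth:
  "spec_le (smyth X) A B \<longleftrightarrow> A \<in> KX X \<and> B \<in> KX X \<and> B \<subseteq> A"
proof
  assume h: "spec_le (smyth X) A B"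
  then have AB: "A \<in> KX X" "B \<in> KX X" unfolding spec_le_def topspace_smyth by auto
  have op: "\<And>U. openin X U \<Longrightarrow> A \<subseteq> U \<Longrightarrow> B \<subseteq> U"
  proof -
    fix U assume "openin X U" "A \<subseteq> U"
    then have "openin (smyth X) {K \<in> KX X. K \<subseteq> U}" "A \<in> {K \<in> KX X. K \<subseteq> U}"
      using open_smyth_basic AB by auto
    then have "B \<in> {K \<in> KX X. K \<subseteq> U}" by (rule open_upper[OF _ _ h])
    then show "B \<subseteq> U" by simp
  qed
  have "B \<subseteq> A"
  proof
    fix y assume y: "y \<in> B"
    have yt: "y \<in> topspace X" using AB(2) y unfolding KX_def saturated_def by auto
    show "y \<in> A"
    proof (rule ccontr)
      assume "y \<notin> A"
      moreover have "saturated X A" using AB(1) unfolding KX_def by simp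
      ultimately obtain U where U: "openin X U" "A \<subseteq> U" "y \<notin> U"
        using saturated_sep[of X A y] yt by blast
      have "B \<subseteq> U" using op[OF U(1,2)] .
      then show False using U(3) y by blast
    qed
  qed
  then show "A \<in> KX X \<and> B \<in> KX X \<and> B \<subseteq> A" using AB by blast
next
  assume h: "A \<in> KX X \<and> B \<in> KX X \<and> B \<subseteq> A"
  show "spec_le (smyth X) A B"
    unfolding spec_le_def in_closure_of topspace_smyth
  proof (intro conjI allI impI)
    fix T assume T: "A \<in> T \<and> openin (smyth X) T"
    then obtain U where U: "openin X U" "A \<subseteq> U" "{K' \<in> KX X. K' \<subseteq> U} \<subseteq> T"
      using smyth_open_nbhd[of X T A] by blast
    have "B \<in> T" using U h by blast
    then show "\<exists>y. y \<in> {B} \<and> y \<in> T" by blast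
  next
    show "A \<in> KX X" using h by simp
  next
    show "B \<in> KX X" using h by simp
  next
    show "A \<in> KX X" using h by simp
  qed
qed

lemma upset_smyth: "A \<in> KX X \<Longrightarrow> upset (smyth X) {A} = {B \<in> KX X. B \<subseteq> A}"
  unfolding upset_def topspace_smyth spec_smyth by auto


lemma saturated_Int: "saturated X A \<Longrightarrow> saturated X B \<Longrightarrow> saturated X (A \<inter> B)"
proof -
  assume a: "saturated X A" "saturated X B"
  have "upset X (A \<inter> B) \<subseteq> A \<inter> B"
    using a unfolding saturated_def upset_def by blast
  moreover have "A \<inter> B \<subseteq> upset X (A \<inter> B)"
    using a spec_refl unfolding saturated_def upset_def by fastforce
  ultimately show ?thesis using a unfolding saturated_def by blast
qed

lemma upset_sub_saturated: "saturated X A \<Longrightarrow> x \<in> A \<Longrightarrow> upset X {x} \<subseteq> A"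
  unfolding saturated_def upset_def by blast

lemma S_starD: "S_star_well_filtered X \<Longrightarrow> F \<subseteq> KX X \<Longrightarrow> filtered_fam F \<Longrightarrow> G \<in> KX X
  \<Longrightarrow> openin X U \<Longrightarrow> U \<noteq> {} \<Longrightarrow> \<Inter>F \<inter> G \<subseteq> U \<Longrightarrow> \<exists>K\<in>F. K \<inter> G \<subseteq> U"
  unfolding S_star_well_filtered_def by blast

lemma wwfD: "weak_well_filtered X \<Longrightarrow> F \<subseteq> KX X \<Longrightarrow> filtered_fam F
  \<Longrightarrow> openin X U \<Longrightarrow> U \<noteq> {} \<Longrightarrow> \<Inter>F \<subseteq> U \<Longrightarrow> \<exists>K\<in>F. K \<subseteq> U"
  unfolding weak_well_filtered_def by blast

lemma d_starD: "d_star_space X \<Longrightarrow> directed_in X D \<Longrightarrow> x \<in> topspace X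
  \<Longrightarrow> openin X U \<Longrightarrow> U \<noteq> {} \<Longrightarrow> (\<Inter>d\<in>D. upset X {d}) \<inter> upset X {x} \<subseteq> U
  \<Longrightarrow> \<exists>d\<in>D. upset X {d} \<inter> upset X {x} \<subseteq> U"
  unfolding d_star_space_def by blast

lemma S_star_imp_d_star:
  assumes "S_star_well_filtered Y" shows "d_star_space Y"
  unfolding d_star_space_def
proof (intro allI impI)
  fix D x U assume h: "directed_in Y D \<and> x \<in> topspace Y \<and> openin Y U \<and> U \<noteq> {} \<and>
       (\<Inter>d\<in>D. upset Y {d}) \<inter> upset Y {x} \<subseteq> U"
  let ?F = "(\<lambda>d. upset Y {d}) ` D"
  have F: "?F \<subseteq> KX Y"
  proof
    fix A assume "A \<in> ?F"
    then obtain d where d: "d \<in> D" "A = upset Y {d}" by blast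
    have "d \<in> topspace Y" using h d(1) unfolding directed_in_def by blast
    then show "A \<in> KX Y" using d(2) upset_single_KX by simp
  qed
  have ff: "filtered_fam ?F"
    unfolding filtered_fam_def
  proof (intro conjI ballI)
    show "?F \<noteq> {}" using h unfolding directed_in_def by auto
    fix A B assume "A \<in> ?F" "B \<in> ?F"
    then obtain a b where ab: "a \<in> D" "b \<in> D" "A = upset Y {a}" "B = upset Y {b}" by blast
    then obtain c where c: "c \<in> D" "spec_le Y a c" "spec_le Y b c"
      using h unfolding directed_in_def by blast
    have "upset Y {c} \<subseteq> upset Y {a}"
    proof
      fix z assume "z \<in> upset Y {c}"
      then have "z \<in> topspace Y" "spec_le Y c z" unfolding upset_def by auto
      then show "z \<in> upset Y {a}" using spec_trans[OF c(2)] unfolding upset_def by auto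
    qed
    moreover have "upset Y {c} \<subseteq> upset Y {b}"
    proof
      fix z assume "z \<in> upset Y {c}"
      then have "z \<in> topspace Y" "spec_le Y c z" unfolding upset_def by auto
      then show "z \<in> upset Y {b}" using spec_trans[OF c(3)] unfolding upset_def by auto
    qed
    ultimately have "upset Y {c} \<subseteq> A" "upset Y {c} \<subseteq> B" using ab by simp_all
    then show "\<exists>C\<in>?F. C \<subseteq> A \<and> C \<subseteq> B" using c
      by (intro bexI[of _ "upset Y {c}"] conjI) (auto intro: imageI)
  qed
  have "\<exists>K\<in>?F. K \<inter> upset Y {x} \<subseteq> U"
    using S_starD[OF assms F ff upset_single_KX[of x Y]] h by auto
  then show "\<exists>d\<in>D. upset Y {d} \<inter> upset Y {x} \<subseteq> U" by blast
qed

lemma S_star_imp_wwf: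
  assumes "S_star_well_filtered X" shows "weak_well_filtered X"
  unfolding weak_well_filtered_def
proof (intro allI impI)
  fix F U assume h: "F \<subseteq> KX X \<and> filtered_fam F \<and> openin X U \<and> U \<noteq> {} \<and> \<Inter> F \<subseteq> U"
  then obtain K0 where K0: "K0 \<in> F" unfolding filtered_fam_def by blast
  have "\<Inter>F \<inter> K0 \<subseteq> U" using h by blast
  then obtain K where K: "K \<in> F" "K \<inter> K0 \<subseteq> U"
    using S_starD[OF assms, of F K0 U] h K0 by blast
  then obtain C where "C \<in> F" "C \<subseteq> K" "C \<subseteq> K0" using h K0 unfolding filtered_fam_def by blast
  then show "\<exists>K\<in>F. K \<subseteq> U" using K by blast
qed

lemma wwf_coherent_S_star:
  assumes "weak_well_filtered X" "coherent_space X" shows "S_star_well_filtered X"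
  unfolding S_star_well_filtered_def
proof (intro allI impI)
  fix F G U assume h: "F \<subseteq> KX X \<and> filtered_fam F \<and> G \<in> KX X \<and> openin X U \<and> U \<noteq> {} \<and> \<Inter> F \<inter> G \<subseteq> U"
  show "\<exists>K\<in>F. K \<inter> G \<subseteq> U"
  proof (cases "\<exists>K\<in>F. K \<inter> G = {}")
    case True then show ?thesis by auto
  next
    case False
    let ?F = "(\<lambda>K. K \<inter> G) ` F"
    have F: "?F \<subseteq> KX X"
    proof
      fix A assume "A \<in> ?F" then obtain K where K: "K \<in> F" "A = K \<inter> G" by blast
      have KK: "K \<in> KX X" "G \<in> KX X" using K h by blast+
      have "K \<inter> G \<noteq> {}" using K False by blast
      moreover have "saturated X (K \<inter> G)" using KK saturated_Int unfolding KX_def by blast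
      moreover have "compactin X (K \<inter> G)" using KK assms(2) unfolding KX_def coherent_space_def by blast
      ultimately show "A \<in> KX X" using K unfolding KX_def by blast
    qed
    have ff: "filtered_fam ?F" unfolding filtered_fam_def
    proof (intro conjI ballI)
      show "?F \<noteq> {}" using h unfolding filtered_fam_def by blast
      fix A B assume "A \<in> ?F" "B \<in> ?F"
      then obtain a b where ab: "a \<in> F" "b \<in> F" "A = a \<inter> G" "B = b \<inter> G" by blast
      then obtain c where "c \<in> F" "c \<subseteq> a" "c \<subseteq> b" using h unfolding filtered_fam_def by blast
      then show "\<exists>C\<in>?F. C \<subseteq> A \<and> C \<subseteq> B" using ab
        by (intro bexI[of _ "c \<inter> G"] conjI) (auto intro: imageI)
    qed
    have "\<Inter>?F = \<Inter>F \<inter> G" using h unfolding filtered_fam_def by auto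
    then have "\<exists>K\<in>?F. K \<subseteq> U" using wwfD[OF assms(1) F ff] h by auto
    then show ?thesis by blast
  qed
qed

lemma d_star_smyth_imp_S_star:
  assumes "d_star_space (smyth X)" shows "S_star_well_filtered X"
  unfolding S_star_well_filtered_def
proof (intro allI impI)
  fix F G U assume h: "F \<subseteq> KX X \<and> filtered_fam F \<and> G \<in> KX X \<and> openin X U \<and> U \<noteq> {} \<and> \<Inter> F \<inter> G \<subseteq> U"
  have FK: "F \<subseteq> KX X" and ffF: "filtered_fam F" and GK: "G \<in> KX X" and oU: "openin X U"
    and Une: "U \<noteq> {}" and sub: "\<Inter> F \<inter> G \<subseteq> U" using h by simp_all
  let ?U = "{K \<in> KX X. K \<subseteq> U}"
  have dir: "directed_in (smyth X) F"
    unfolding directed_in_def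
  proof (intro conjI ballI)
    show "F \<noteq> {}" using ffF unfolding filtered_fam_def by simp
    show "F \<subseteq> topspace (smyth X)" using FK by (simp add: topspace_smyth)
    fix a b assume ab: "a \<in> F" "b \<in> F"
    then obtain c where c: "c \<in> F" "c \<subseteq> a" "c \<subseteq> b" using ffF unfolding filtered_fam_def by blast
    have "a \<in> KX X" "b \<in> KX X" "c \<in> KX X" using ab c(1) FK by auto
    then have "spec_le (smyth X) a c" "spec_le (smyth X) b c" using c by (simp_all add: spec_smyth)
    then show "\<exists>c\<in>F. spec_le (smyth X) a c \<and> spec_le (smyth X) b c" using c(1) by blast
  qed
  have opU: "openin (smyth X) ?U" using oU by (rule open_smyth_basic)
  obtain u where u: "u \<in> U" using Une by blast
  have ut: "u \<in> topspace X" using u oU openin_subset by blast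
  have "upset X {u} \<subseteq> U"
  proof
    fix z assume "z \<in> upset X {u}"
    then have "spec_le X u z" unfolding upset_def by simp
    then show "z \<in> U" using open_upper[OF oU u] by simp
  qed
  then have "upset X {u} \<in> ?U" using upset_single_KX[OF ut] by simp
  then have neU: "?U \<noteq> {}" by blast
  have up: "\<And>A. A \<in> KX X \<Longrightarrow> upset (smyth X) {A} = {B \<in> KX X. B \<subseteq> A}" by (rule upset_smyth)
  have hyp: "(\<Inter>d\<in>F. upset (smyth X) {d}) \<inter> upset (smyth X) {G} \<subseteq> ?U"
  proof
    fix K assume K: "K \<in> (\<Inter>d\<in>F. upset (smyth X) {d}) \<inter> upset (smyth X) {G}"
    then have "K \<in> upset (smyth X) {G}" by simp
    then have KG: "K \<in> KX X" "K \<subseteq> G" using up[OF GK] by simp_all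
    have "K \<subseteq> d" if d: "d \<in> F" for d
    proof -
      have "K \<in> upset (smyth X) {d}" using K d by blast
      then show ?thesis using up[of d] d FK by auto
    qed
    then have "K \<subseteq> \<Inter>F" by blast
    then have "K \<subseteq> U" using KG(2) sub by blast
    then show "K \<in> ?U" using KG(1) by simp
  qed
  have Gt: "G \<in> topspace (smyth X)" using GK by (simp add: topspace_smyth)
  obtain K where K: "K \<in> F" "upset (smyth X) {K} \<inter> upset (smyth X) {G} \<subseteq> ?U"
    using d_starD[OF assms dir Gt opU neU hyp] by (elim bexE)
  have KK: "K \<in> KX X" using K(1) FK by blast
  have "K \<inter> G \<subseteq> U"
  proof
    fix y assume y: "y \<in> K \<inter> G"
    have yt: "y \<in> topspace X" using y KK unfolding KX_def saturated_def by blast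
    have satK: "saturated X K" and satG: "saturated X G" using KK GK unfolding KX_def by simp_all
    have y1: "upset X {y} \<subseteq> K" using upset_sub_saturated[OF satK] y by simp
    have y2: "upset X {y} \<subseteq> G" using upset_sub_saturated[OF satG] y by simp
    have yK: "upset X {y} \<in> KX X" by (rule upset_single_KX[OF yt])
    have "upset X {y} \<in> upset (smyth X) {K}" using up[OF KK] yK y1 by simp
    moreover have "upset X {y} \<in> upset (smyth X) {G}" using up[OF GK] yK y2 by simp
    ultimately have "upset X {y} \<in> ?U" using K(2) by blast
    then have "upset X {y} \<subseteq> U" by simp
    moreover have "y \<in> upset X {y}" using spec_refl[OF yt] yt unfolding upset_def by simp
    ultimately show "y \<in> U" by blast
  qed
  then show "\<exists>K\<in>F. K \<inter> G \<subseteq> U" using K(1) by blast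
qed

lemma filtered_Inter_compact:
  assumes w: "weak_well_filtered X" and F: "F \<subseteq> KX X" "filtered_fam F" and ne: "\<Inter>F \<noteq> {}"
  shows "compactin X (\<Inter>F)"
  unfolding compactin_def
proof (intro conjI allI impI)
  obtain K0 where K0: "K0 \<in> F" using F unfolding filtered_fam_def by blast
  have "K0 \<subseteq> topspace X" using K0 F unfolding KX_def saturated_def by blast
  then show "\<Inter>F \<subseteq> topspace X" using K0 by blast
  fix \<U> assume U: "(\<forall>U\<in>\<U>. openin X U) \<and> \<Inter>F \<subseteq> \<Union>\<U>"
  have "openin X (\<Union>\<U>)" using U by blast
  moreover have "\<Union>\<U> \<noteq> {}" using U ne by blast
  ultimately obtain K where K: "K \<in> F" "K \<subseteq> \<Union>\<U>" using wwfD[OF w F] U by blast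
  have "compactin X K" using K F unfolding KX_def by blast
  then obtain \<F> where "finite \<F>" "\<F> \<subseteq> \<U>" "K \<subseteq> \<Union>\<F>"
    using K U unfolding compactin_def by meson
  then show "\<exists>\<F>. finite \<F> \<and> \<F> \<subseteq> \<U> \<and> \<Inter>F \<subseteq> \<Union>\<F>" using K by blast
qed

lemma Inter_saturated:
  assumes "F \<noteq> {}" "\<And>K. K \<in> F \<Longrightarrow> saturated X K" shows "saturated X (\<Inter>F)"
proof -
  have sub: "\<Inter>F \<subseteq> topspace X" using assms unfolding saturated_def by blast
  have "upset X (\<Inter>F) \<subseteq> \<Inter>F"
  proof
    fix z assume "z \<in> upset X (\<Inter>F)"
    then obtain y where y: "z \<in> topspace X" "y \<in> \<Inter>F" "spec_le X y z" unfolding upset_def by blast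
    show "z \<in> \<Inter>F"
    proof
      fix K assume K: "K \<in> F"
      then have "z \<in> upset X K" using y unfolding upset_def by blast
      then show "z \<in> K" using assms(2)[OF K] unfolding saturated_def by blast
    qed
  qed
  moreover have "\<Inter>F \<subseteq> upset X (\<Inter>F)"
  proof
    fix z assume z: "z \<in> \<Inter>F"
    then have "z \<in> topspace X" using sub by blast
    then show "z \<in> upset X (\<Inter>F)" using z spec_refl[of z X] unfolding upset_def by blast
  qed
  ultimately show ?thesis using sub unfolding saturated_def by blast
qed

lemma wwf_coherent_d_star:
  assumes w: "weak_well_filtered X" and c: "coherent_space X" shows "d_star_space (smyth X)"
  unfolding d_star_space_def
proof (intro allI impI)
  fix D G \<U> assume h: "directed_in (smyth X) D \<and> G \<in> topspace (smyth X) \<and> openin (smyth X) \<U> \<and> \<U> \<noteq> {}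
       \<and> (\<Inter>d\<in>D. upset (smyth X) {d}) \<inter> upset (smyth X) {G} \<subseteq> \<U>"
  have dir: "directed_in (smyth X) D" and Gt: "G \<in> topspace (smyth X)" and oU: "openin (smyth X) \<U>"
    and Une: "\<U> \<noteq> {}" and hyp: "(\<Inter>d\<in>D. upset (smyth X) {d}) \<inter> upset (smyth X) {G} \<subseteq> \<U>"
    using h by simp_all
  have D: "D \<subseteq> KX X" "D \<noteq> {}" using dir unfolding directed_in_def by (simp_all add: topspace_smyth)
  have G: "G \<in> KX X" using Gt by (simp add: topspace_smyth)
  have Usub: "\<U> \<subseteq> KX X" using openin_subset[OF oU] by (simp add: topspace_smyth)
  have dirD: "\<exists>c\<in>D. c \<subseteq> a \<and> c \<subseteq> b" if ab: "a \<in> D" "b \<in> D" for a b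
  proof -
    obtain c where "c \<in> D" "spec_le (smyth X) a c" "spec_le (smyth X) b c"
      using dir ab unfolding directed_in_def by blast
    then show ?thesis by (auto simp: spec_smyth)
  qed
  have up: "\<And>A. A \<in> KX X \<Longrightarrow> upset (smyth X) {A} = {B \<in> KX X. B \<subseteq> A}" by (rule upset_smyth)
  have goal: "\<exists>d\<in>D. {B \<in> KX X. B \<subseteq> d \<inter> G} \<subseteq> \<U>"
  proof (cases "\<exists>d\<in>D. d \<inter> G = {}")
    case True
    then obtain d where d: "d \<in> D" "d \<inter> G = {}" by blast
    have "{B \<in> KX X. B \<subseteq> d \<inter> G} = {}" using d(2) unfolding KX_def by auto
    then show ?thesis using d(1) by auto
  next
    case False
    let ?F = "(\<lambda>K. K \<inter> G) ` D"
    have F: "?F \<subseteq> KX X"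
    proof
      fix A assume "A \<in> ?F" then obtain K where K: "K \<in> D" "A = K \<inter> G" by blast
      have KK: "K \<in> KX X" using K D by blast
      have "K \<inter> G \<noteq> {}" using K False by blast
      moreover have "saturated X (K \<inter> G)" using KK G saturated_Int unfolding KX_def by blast
      moreover have "compactin X (K \<inter> G)" using KK G c unfolding KX_def coherent_space_def by blast
      ultimately show "A \<in> KX X" using K unfolding KX_def by blast
    qed
    have ff: "filtered_fam ?F" unfolding filtered_fam_def
    proof (intro conjI ballI)
      show "?F \<noteq> {}" using D by blast
      fix A B assume "A \<in> ?F" "B \<in> ?F"
      then obtain a b where ab: "a \<in> D" "b \<in> D" "A = a \<inter> G" "B = b \<inter> G" by blast
      then obtain c where "c \<in> D" "c \<subseteq> a" "c \<subseteq> b" using dirD by blast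
      then show "\<exists>C\<in>?F. C \<subseteq> A \<and> C \<subseteq> B" using ab
        by (intro bexI[of _ "c \<inter> G"] conjI) (auto intro: imageI)
    qed
    have IF: "\<Inter>?F = \<Inter>D \<inter> G" using D by auto
    have keyU: "\<exists>d\<in>D. {B \<in> KX X. B \<subseteq> d \<inter> G} \<subseteq> \<U>"
      if U: "openin X U" "U \<noteq> {}" "\<Inter>D \<inter> G \<subseteq> U" "{K' \<in> KX X. K' \<subseteq> U} \<subseteq> \<U>" for U
    proof -
      have sF: "\<Inter>?F \<subseteq> U" using U(3) IF by simp
      obtain K where K: "K \<in> ?F" "K \<subseteq> U" using wwfD[OF w F ff U(1,2) sF] by (elim bexE)
      then obtain d where d: "d \<in> D" "K = d \<inter> G" by blast
      have "{B \<in> KX X. B \<subseteq> d \<inter> G} \<subseteq> {K' \<in> KX X. K' \<subseteq> U}" using K(2) d(2) by auto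
      then have "{B \<in> KX X. B \<subseteq> d \<inter> G} \<subseteq> \<U>" using U(4) by (rule subset_trans)
      then show ?thesis using d(1) by (rule bexI)
    qed
    show ?thesis
    proof (cases "\<Inter>D \<inter> G = {}")
      case True
      obtain K where K: "K \<in> \<U>" using Une by blast
      then obtain U where U: "openin X U" "K \<subseteq> U" "{K' \<in> KX X. K' \<subseteq> U} \<subseteq> \<U>"
        using smyth_open_nbhd[OF oU K] by blast
      have "K \<in> KX X" using K Usub by blast
      then have "K \<noteq> {}" unfolding KX_def by simp
      then have "U \<noteq> {}" using U(2) by blast
      moreover have "\<Inter>D \<inter> G \<subseteq> U" using True by simp
      ultimately show ?thesis using keyU U(1,3) by blast
    next
      case False
      have "compactin X (\<Inter>?F)" using filtered_Inter_compact[OF w F ff] False IF by simp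
      then have cp: "compactin X (\<Inter>D \<inter> G)" using IF by simp
      have "\<And>K. K \<in> ?F \<Longrightarrow> saturated X K" using F unfolding KX_def by blast
      then have "saturated X (\<Inter>?F)" using Inter_saturated[of ?F X] D by blast
      then have sat: "saturated X (\<Inter>D \<inter> G)" using IF by simp
      have LK: "\<Inter>D \<inter> G \<in> KX X" using False cp sat unfolding KX_def by simp
      have "\<Inter>D \<inter> G \<in> upset (smyth X) {d}" if "d \<in> D" for d
        using LK up[of d] that D by auto
      moreover have "\<Inter>D \<inter> G \<in> upset (smyth X) {G}" using LK up[OF G] by auto
      ultimately have "\<Inter>D \<inter> G \<in> (\<Inter>d\<in>D. upset (smyth X) {d}) \<inter> upset (smyth X) {G}" by blast
      then have L: "\<Inter>D \<inter> G \<in> \<U>" using hyp by blast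
      obtain U where U: "openin X U" "\<Inter>D \<inter> G \<subseteq> U" "{K' \<in> KX X. K' \<subseteq> U} \<subseteq> \<U>"
        using smyth_open_nbhd[OF oU L] by blast
      have "U \<noteq> {}" using U(2) False by blast
      then show ?thesis using keyU U by blast
    qed
  qed
  then obtain d where d: "d \<in> D" "{B \<in> KX X. B \<subseteq> d \<inter> G} \<subseteq> \<U>" by blast
  have dK: "d \<in> KX X" using d(1) D by blast
  have "upset (smyth X) {d} \<inter> upset (smyth X) {G} = {B \<in> KX X. B \<subseteq> d \<inter> G}"
    using up[OF dK] up[OF G] by auto
  then have "upset (smyth X) {d} \<inter> upset (smyth X) {G} \<subseteq> \<U>" using d(2) by simp
  then show "\<exists>d\<in>D. upset (smyth X) {d} \<inter> upset (smyth X) {G} \<subseteq> \<U>" using d(1) by blast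
qed

lemma kc_coherent: "kc_space X \<Longrightarrow> coherent_space X"
  unfolding coherent_space_def
proof (intro allI impI)
  fix A B assume kc: "kc_space X" and h: "compactin X A \<and> saturated X A \<and> compactin X B \<and> saturated X B"
  have cB: "closedin X B" using kc h unfolding kc_space_def by blast
  have cA: "closedin X A" using kc h unfolding kc_space_def by blast
  have "closedin X (A \<inter> B)" using cA cB by (rule closedin_Int)
  then show "compactin X (A \<inter> B)" using closed_compactin[of X A "A \<inter> B"] h by blast
qed

theorem mainTheorem20:
  fixes X :: "'a topology"
  assumes "t0_space X"
  shows "(S_star_well_filtered (smyth X) \<longrightarrow> d_star_space (smyth X))
       \<and> (d_star_space (smyth X) \<longrightarrow> S_star_well_filtered X)
       \<and> (S_star_well_filtered X \<longrightarrow> weak_well_filtered X)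
       \<and> (coherent_space X \<longrightarrow>
            (d_star_space (smyth X) \<longleftrightarrow> S_star_well_filtered X)
          \<and> (S_star_well_filtered X \<longleftrightarrow> weak_well_filtered X))
       \<and> (kc_space X \<longrightarrow>
            (d_star_space (smyth X) \<longleftrightarrow> S_star_well_filtered X)
          \<and> (S_star_well_filtered X \<longleftrightarrow> weak_well_filtered X))"
  using S_star_imp_d_star d_star_smyth_imp_S_star S_star_imp_wwf wwf_coherent_S_star
    wwf_coherent_d_star kc_coherent by meson

end
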